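(* Let $s$ be a Thiele scoring function with $s(2)-s(1)<s(1)$. Then the query function $g$ of the sequential Thiele rule induced by $s$, namely $g(A,k,(c_1,\dots,c_\ell))=\arg\max_{x\in C\setminus\{c_1,\dots,c_\ell\}}\hat s(A,\{x,c_1,\dots,c_\ell\})$, is standard, continuous and concurring.
   Context: Candidates form a finite set $C$, $|C|=m>1$. An approval profile $A$ has a nonempty finite voter set $N_A$, each $i\in N_A$ having a nonempty ballot $A_i\subseteq C$; $N_A(c)=\{i\in N_A:c\in A_i\}$, $n=|N_A|$. For profiles $A,A'$ and $\lambda\in\mathbb N$, $\lambda A+A'$ is the profile containing $\lambda$ copies of each voter of $A$ plus a copy of each voter of $A'$. A Thiele scoring function is $s:\mathbb N_0\to\mathbb Q$ with $s(0)=0$, $s(1)>0$, $s$ nondecreasing and concave ($s(x+1)-s(x)\ge s(x+2)-s(x+1)$); $\hat s(A,W)=\sum_{i\in N_A}s(|A_i\cap W|)$. $\mathcal S(C)$ is the set of non-repeating candidate sequences of length at most $m-2$. Axioms on a query function $g$ (mapping $(A,k,S)$, $S=(c_1,\dots,c_\ell)\in\mathcal S(C)$, to a subset of $C\setminus\{c_1,\dots,c_\ell\}$): (Continuity) for all $A,A',k,S$, $g(\lambda A+A',k,S)\subseteq g(A,k,S)$ for all sufficiently large $\lambda$. (Standardness) $g(A,k,\emptyset)$ is the set of candidates maximizing $|N_A(c)|$. (Concurrence) for every profile $A$ with $|A_i|\le2$ for all $i$ and $|N_A(c)|=|N_A(d)|\le n/k$ for all $c,d\in C$, every $(c_1,\dots,c_\ell)\in\mathcal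 S(C)$, and all $c,d\in C\setminus\{c_1,\dots,c_\ell\}$ with $|\{i:A_i=\{c_j,d\}\}|\ge|\{i:A_i=\{c_j,c\}\}|$ for all $j\le\ell$, at least one strictly, we have $d\notin g(A,k,(c_1,\dots,c_\ell))$. *)

theory Defs
  imports Complex_Main "HOL-Library.Multiset"
begin

(* A profile is a nonempty finite multiset of nonempty ballots (subsets of C);
   each element of the multiset is one voter's ballot.
   Then lambda A + A' is  repeat_mset lambda A + A'. *)

definition thiele_scoring :: "(nat \<Rightarrow> rat) \<Rightarrow> bool" where
  "thiele_scoring s \<longleftrightarrow> s 0 = 0 \<and> s 1 > 0 \<and> (\<forall>x. s x \<le> s (Suc x))
     \<and> (\<forall>x. s (Suc x) - s x \<ge> s (Suc (Suc x)) - s (Suc x))"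

definition profile :: "'c set \<Rightarrow> 'c set multiset \<Rightarrow> bool" where
  "profile C A \<longleftrightarrow> A \<noteq> {#} \<and> (\<forall>B \<in># A. B \<noteq> {} \<and> B \<subseteq> C)"

definition approvals :: "'c set multiset \<Rightarrow> 'c \<Rightarrow> nat" where
  "approvals A c = size (filter_mset (\<lambda>B. c \<in> B) A)"

definition thiele_score :: "(nat \<Rightarrow> rat) \<Rightarrow> 'c set multiset \<Rightarrow> 'c set \<Rightarrow> rat" where
  "thiele_score s A W = (\<Sum>B \<in># A. s (card (B \<inter> W)))"

definition seqs :: "'c set \<Rightarrow> 'c list set" where
  "seqs C = {S. distinct S \<and> set S \<subseteq> C \<and> length S \<le> card C - 2}"

(* query function of the sequential Thiele rule (independent of k) *)
definition seq_thiele_query ::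
  "(nat \<Rightarrow> rat) \<Rightarrow> 'c set \<Rightarrow> 'c set multiset \<Rightarrow> nat \<Rightarrow> 'c list \<Rightarrow> 'c set" where
  "seq_thiele_query s C A k S =
     {x \<in> C - set S. \<forall>y \<in> C - set S.
        thiele_score s A (insert y (set S)) \<le> thiele_score s A (insert x (set S))}"

type_synonym 'c query = "'c set multiset \<Rightarrow> nat \<Rightarrow> 'c list \<Rightarrow> 'c set"

definition query_continuous :: "'c set \<Rightarrow> 'c query \<Rightarrow> bool" where
  "query_continuous C g \<longleftrightarrow>
     (\<forall>A A' k S. profile C A \<longrightarrow> profile C A' \<longrightarrow> k \<ge> 1 \<longrightarrow> S \<in> seqs C \<longrightarrow>
        (\<exists>l0. \<forall>l\<ge>l0. l \<ge> 1 \<longrightarrow> g (repeat_mset l A + A') k S \<subseteq> g A k S))"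

definition query_standard :: "'c set \<Rightarrow> 'c query \<Rightarrow> bool" where
  "query_standard C g \<longleftrightarrow>
     (\<forall>A k. profile C A \<longrightarrow> k \<ge> 1 \<longrightarrow>
        g A k [] = {c \<in> C. \<forall>d \<in> C. approvals A d \<le> approvals A c})"

definition pair_count :: "'c set multiset \<Rightarrow> 'c \<Rightarrow> 'c \<Rightarrow> nat" where
  "pair_count A x y = count A {x, y}"

definition query_concurring :: "'c set \<Rightarrow> 'c query \<Rightarrow> bool" where
  "query_concurring C g \<longleftrightarrow>
     (\<forall>A k S c d. profile C A \<longrightarrow> k \<ge> 1 \<longrightarrow>
        (\<forall>B \<in># A. card B \<le> 2) \<longrightarrow>
        (\<forall>x \<in> C. \<forall>y \<in> C. approvals A x = approvals A y
                 \<and> real (approvals A x) \<le> real (size A) / real k) \<longrightarrow>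
        S \<in> seqs C \<longrightarrow> c \<in> C - set S \<longrightarrow> d \<in> C - set S \<longrightarrow>
        (\<forall>cj \<in> set S. pair_count A cj d \<ge> pair_count A cj c) \<longrightarrow>
        (\<exists>cj \<in> set S. pair_count A cj d > pair_count A cj c) \<longrightarrow>
        d \<notin> g A k S)"

end

theory Submission
  imports Defs
begin

lemma score_empty[simp]: "thiele_score s {#} W = 0"
  by (simp add: thiele_score_def)

lemma score_add[simp]: "thiele_score s (add_mset B A) W = s (card (B \<inter> W)) + thiele_score s A W"
  by (simp add: thiele_score_def)

lemma score_union: "thiele_score s (A + A') W = thiele_score s A W + thiele_score s A' W"
  by (simp add: thiele_score_def)

lemma score_repeat: "thiele_score s (repeat_mset l A) W = of_nat l * thiele_score s A W"
  by (induction l) (simp_all add: score_union algebra_simps)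

lemma approvals_empty[simp]: "approvals {#} x = 0"
  by (simp add: approvals_def)

lemma approvals_add[simp]: "approvals (add_mset B A) x = approvals A x + (if x \<in> B then 1 else 0)"
  by (simp add: approvals_def)

lemma score_single:
  assumes "s 0 = 0"
  shows "thiele_score s A {y} = s 1 * of_nat (approvals A y)"
proof (induction A)
  case empty then show ?case by simp
next
  case (add B A)
  have "card (B \<inter> {y}) = (if y \<in> B then 1 else 0)" by auto
  then show ?case using add assms by (simp add: algebra_simps)
qed

lemma ballot_identity:
  fixes s :: "nat \<Rightarrow> rat"
  assumes "s 0 = 0" "finite T" "x \<notin> T" "finite B" "card B \<le> 2"
  shows "s (card (B \<inter> insert x T)) = s (card (B \<inter> T)) + (if x \<in> B then s 1 else 0)
     - (2 * s 1 - s 2) * (\<Sum>cj\<in>T. if B = {x, cj} then 1 else 0)"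
proof (cases "x \<in> B")
  case False
  then have "B \<inter> insert x T = B \<inter> T" by auto
  moreover have "(\<Sum>cj\<in>T. if B = {x, cj} then 1 else (0::rat)) = 0"
    using False by (intro sum.neutral) auto
  ultimately show ?thesis using False by simp
next
  case True
  have eq: "B \<inter> insert x T = insert x (B \<inter> T)" using True by auto
  have cI: "card (B \<inter> insert x T) = Suc (card (B \<inter> T))"
    unfolding eq using assms by (simp add: card_insert_if)
  show ?thesis
  proof (cases "B \<inter> T = {}")
    case True2: True
    have "(\<Sum>cj\<in>T. if B = {x, cj} then 1 else (0::rat)) = 0"
      using True2 by (intro sum.neutral) auto
    then show ?thesis using cI True2 True assms(1) by simp
  next
    case False
    then obtain y where y: "y \<in> B" "y \<in> T" by auto
    have xy: "x \<noteq> y" using y assms by auto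
    have sub: "{x, y} \<subseteq> B" using y True by auto
    have "card {x, y} = 2" using xy by simp
    then have Bxy: "B = {x, y}"
      using card_subset_eq[OF assms(4) sub] assms(5) card_mono[OF assms(4) sub] by simp
    have BT: "B \<inter> T = {y}" using Bxy y assms(3) by auto
    have "(\<Sum>cj\<in>T. if B = {x, cj} then 1 else (0::rat)) = (\<Sum>cj\<in>T. if cj = y then 1 else 0)"
      using Bxy xy assms(3) by (intro sum.cong) (auto simp: doubleton_eq_iff)
    also have "\<dots> = 1" using y assms(2) by simp
    finally have "(\<Sum>cj\<in>T. if B = {x, cj} then 1 else (0::rat)) = 1" .
    then show ?thesis using cI BT True by (simp add: numeral_2_eq_2)
  qed
qed

lemma score_formula:
  fixes s :: "nat \<Rightarrow> rat"
  assumes "s 0 = 0" "finite T" "x \<notin> T" "\<forall>B\<in>#A. finite B \<and> card B \<le> 2"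
  shows "thiele_score s A (insert x T) = thiele_score s A T + s 1 * of_nat (approvals A x)
     - (2 * s 1 - s 2) * (\<Sum>cj\<in>T. of_nat (count A {x, cj}))"
  using assms(4)
proof (induction A)
  case empty then show ?case by simp
next
  case (add B A)
  have IH: "thiele_score s A (insert x T) = thiele_score s A T + s 1 * of_nat (approvals A x)
     - (2 * s 1 - s 2) * (\<Sum>cj\<in>T. of_nat (count A {x, cj}))" using add by simp
  have bi: "s (card (B \<inter> insert x T)) = s (card (B \<inter> T)) + (if x \<in> B then s 1 else 0)
     - (2 * s 1 - s 2) * (\<Sum>cj\<in>T. if B = {x, cj} then 1 else 0)"
    using ballot_identity[of s T x B] assms add.prems by simp
  have cnt: "(\<Sum>cj\<in>T. of_nat (count (add_mset B A) {x, cj})) =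
     (\<Sum>cj\<in>T. of_nat (count A {x, cj})) + (\<Sum>cj\<in>T. if B = {x, cj} then 1 else (0::rat))"
    by (auto simp: sum.distrib[symmetric] intro!: sum.cong)
  have e1: "thiele_score s (add_mset B A) (insert x T) = s (card (B \<inter> insert x T)) + thiele_score s A (insert x T)"
    by (rule score_add)
  have e2: "thiele_score s (add_mset B A) T = s (card (B \<inter> T)) + thiele_score s A T"
    by (rule score_add)
  have e3: "(of_nat (approvals (add_mset B A) x) :: rat) = of_nat (approvals A x) + (if x \<in> B then 1 else 0)"
    by simp
  show ?case unfolding e1 e2 e3 cnt bi IH
    by (cases "x \<in> B") (simp_all add: algebra_simps)
qed

theorem mainTheorem4:
  fixes s :: "nat \<Rightarrow> rat" and C :: "'c set"
  assumes "finite C" and "card C > 1"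
    and "thiele_scoring s" and "s 2 - s 1 < s 1"
  shows "query_standard C (seq_thiele_query s C)
       \<and> query_continuous C (seq_thiele_query s C)
       \<and> query_concurring C (seq_thiele_query s C)"
proof -
  have s0: "s 0 = 0" and s1: "s 1 > 0" using assms(3) unfolding thiele_scoring_def by auto
  have delta: "2 * s 1 - s 2 > 0" using assms(4) by simp
  have std: "query_standard C (seq_thiele_query s C)"
    unfolding query_standard_def seq_thiele_query_def
    using s1 s0 by (simp add: score_single)
  have cont: "query_continuous C (seq_thiele_query s C)"
    unfolding query_continuous_def
  proof (intro allI impI)
    fix A A' :: "'c set multiset" and k :: nat and S
    define R where "R = C - set S"
    define sc where "sc = (\<lambda>M y. thiele_score s M (insert y (set S)))"
    define P where "P = {(x, y). x \<in> R \<and> y \<in> R \<and> sc A x < sc A y}"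
    have finP: "finite P" unfolding P_def R_def
      by (rule finite_subset[of _ "C \<times> C"]) (use assms(1) in auto)
    have "\<forall>p\<in>P. \<exists>N::nat. (sc A' (fst p) - sc A' (snd p)) / (sc A (snd p) - sc A (fst p)) < of_nat N"
      using reals_Archimedean2 by blast
    then obtain N where N: "\<And>p. p \<in> P \<Longrightarrow>
        (sc A' (fst p) - sc A' (snd p)) / (sc A (snd p) - sc A (fst p)) < of_nat (N p)"
      by metis
    define l0 where "l0 = Max (insert 0 (N ` P))"
    show "\<exists>l0. \<forall>l\<ge>l0. l \<ge> 1 \<longrightarrow> seq_thiele_query s C (repeat_mset l A + A') k S \<subseteq> seq_thiele_query s C A k S"
    proof (intro exI[of _ l0] allI impI subsetI)
      fix l x assume l: "l0 \<le> l" and x: "x \<in> seq_thiele_query s C (repeat_mset l A + A') k S"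
      have xR: "x \<in> R" and xmax: "\<And>y. y \<in> R \<Longrightarrow>
          of_nat l * sc A y + sc A' y \<le> of_nat l * sc A x + sc A' x"
        using x unfolding seq_thiele_query_def R_def sc_def by (auto simp: score_union score_repeat)
      show "x \<in> seq_thiele_query s C A k S"
      proof (rule ccontr)
        assume "x \<notin> seq_thiele_query s C A k S"
        then obtain y where y: "y \<in> R" "sc A x < sc A y"
          using xR unfolding seq_thiele_query_def R_def sc_def by auto
        then have p: "(x, y) \<in> P" using xR unfolding P_def by auto
        have "N (x, y) \<le> l0" unfolding l0_def using finP p by (intro Max_ge) auto
        then have Nl: "of_nat (N (x, y)) \<le> (of_nat l :: rat)" using l by simp
        have g: "sc A y - sc A x > 0" using y by simp
        have "(sc A' x - sc A' y) / (sc A y - sc A x) < of_nat l" using N[OF p] Nl by simp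
        then have "sc A' x - sc A' y < of_nat l * (sc A y - sc A x)"
          using g by (simp add: divide_less_eq)
        then show False using xmax[OF y(1)] by (simp add: algebra_simps)
      qed
    qed
  qed
  have conc: "query_concurring C (seq_thiele_query s C)"
    unfolding query_concurring_def
  proof (intro allI impI)
    fix A :: "'c set multiset" and k :: nat and S c d
    assume prof: "profile C A" and card2: "\<forall>B\<in>#A. card B \<le> 2"
      and eqap: "\<forall>x\<in>C. \<forall>y\<in>C. approvals A x = approvals A y \<and> real (approvals A x) \<le> real (size A) / real k"
      and c: "c \<in> C - set S" and d: "d \<in> C - set S"
      and ge: "\<forall>cj\<in>set S. pair_count A cj c \<le> pair_count A cj d"
      and gt: "\<exists>cj\<in>set S. pair_count A cj c < pair_count A cj d"
    have fin: "\<forall>B\<in>#A. finite B \<and> card B \<le> 2"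
      using prof card2 assms(1) unfolding profile_def by (auto intro: finite_subset)
    have ap: "approvals A c = approvals A d" using eqap c d by auto
    have "(\<Sum>cj\<in>set S. (of_nat (count A {c, cj})::rat)) < (\<Sum>cj\<in>set S. of_nat (count A {d, cj}))"
      using ge gt unfolding pair_count_def
      by (intro sum_strict_mono_ex1) (auto simp: insert_commute)
    then have "thiele_score s A (insert d (set S)) < thiele_score s A (insert c (set S))"
      using score_formula[of s "set S" c A] score_formula[of s "set S" d A] s0 c d fin ap delta
      by simp
    then show "d \<notin> seq_thiele_query s C A k S"
      using c unfolding seq_thiele_query_def by force
  qed
  show ?thesis using std cont conc by blast
qed

end
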